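(* Let $n$ be an odd positive integer, and suppose that $n-1$ queens are placed on $\mathbb{Z}_n^2$ without conflict. Then one more queen can be placed on $\mathbb{Z}_n^2$ so that the resulting $n$ queens are without conflict.
   Context: Queens are placed on distinct fields of the torus board $\mathbb{Z}_n^2$. Two queens at distinct fields $(x,y),(x',y')$ are in conflict iff $x=x'$, or $y=y'$, or $x+y=x'+y'$, or $x-y=x'-y'$ in $\mathbb{Z}_n$. A placement is without conflict if no two queens are in conflict. *)

theory Defs
  imports Main
begin

text \<open>Fields of the torus board Z_n^2 are represented by pairs (x,y) of integers
with 0 <= x,y < n; arithmetic conditions are read modulo n.\<close>

definition board :: "nat \<Rightarrow> (int \<times> int) set" where
  "board n = {0..<int n} \<times> {0..<int n}"

definition in_conflict :: "nat \<Rightarrow> int \<times> int \<Rightarrow> int \<times> int \<Rightarrow> bool" where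
  "in_conflict n p q \<longleftrightarrow>
     (fst p mod int n = fst q mod int n) \<or>
     (snd p mod int n = snd q mod int n) \<or>
     ((fst p + snd p) mod int n = (fst q + snd q) mod int n) \<or>
     ((fst p - snd p) mod int n = (fst q - snd q) mod int n)"

definition without_conflict :: "nat \<Rightarrow> (int \<times> int) set \<Rightarrow> bool" where
  "without_conflict n Q \<longleftrightarrow>
     (\<forall>p\<in>Q. \<forall>q\<in>Q. p \<noteq> q \<longrightarrow> \<not> in_conflict n p q)"

end

theory Submission
  imports Defs
begin
lemma twice_sum: "2 * (\<Sum>{0..<int m}) = int m * (int m - 1)"
proof (induction m)
  case 0 then show ?case by simp
next
  case (Suc m)
  have "{0..<int (Suc m)} = insert (int m) {0..<int m}" by auto
  then have "(\<Sum>{0..<int (Suc m)}) = int m + (\<Sum>{0..<int m})" by simp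
  then show ?case using Suc by (simp add: algebra_simps)
qed
lemma sum_mod0: assumes "odd n" shows "(\<Sum>{0..<int n}) mod int n = 0"
proof -
  obtain k where k: "n = 2*k+1" using assms oddE by blast
  have "2 * (\<Sum>{0..<int n}) = 2 * (int n * int k)" using twice_sum[of n] k by simp
  then have "(\<Sum>{0..<int n}) = int n * int k" by simp
  then show ?thesis by simp
qed

lemma missing:
  fixes f :: "'a \<Rightarrow> int"
  assumes "finite Q" "inj_on f Q" "f ` Q \<subseteq> {0..<int n}" "card Q = n - 1" "n > 0"
  shows "\<exists>b. 0 \<le> b \<and> b < int n \<and> b \<notin> f ` Q \<and> (\<Sum>q\<in>Q. f q) = (\<Sum>{0..<int n}) - b"
proof -
  have c: "card (f ` Q) = n - 1" using assms card_image by metis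
  have "card (f ` Q) < card {0..<int n}" using c assms(5) by simp
  then obtain b where b: "b \<in> {0..<int n}" "b \<notin> f ` Q"
  proof -
    have "\<not> {0..<int n} \<subseteq> f ` Q"
      using \<open>card (f ` Q) < card {0..<int n}\<close> card_mono[OF finite_imageI[OF assms(1)]] leD by blast
    then show ?thesis using that by blast
  qed
  have sub: "f ` Q \<subseteq> {0..<int n} - {b}" using assms(3) b by blast
  have "card ({0..<int n} - {b}) = n - 1" using b by simp
  then have eq: "f ` Q = {0..<int n} - {b}" using sub c
    by (metis card_subset_eq finite_Diff finite_atLeastLessThan_int)
  have "(\<Sum>q\<in>Q. f q) = (\<Sum>(f ` Q))" using sum.reindex[OF assms(2), of id] by simp
  also have "\<dots> = (\<Sum>{0..<int n}) - b" using eq b by (simp add: sum_diff1)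
  finally show ?thesis using b by auto
qed

theorem mainTheorem5:
  fixes n :: nat and Q :: "(int \<times> int) set"
  assumes "odd n" and "n > 0"
    and "Q \<subseteq> board n" and "card Q = n - 1"
    and "without_conflict n Q"
  shows "\<exists>q \<in> board n. q \<notin> Q \<and> without_conflict n (insert q Q)"
proof -
  have fin: "finite Q" using assms(3) finite_subset unfolding board_def by blast
  have inb: "\<And>p. p \<in> Q \<Longrightarrow> 0 \<le> fst p \<and> fst p < int n \<and> 0 \<le> snd p \<and> snd p < int n"
    using assms(3) unfolding board_def by auto
  have nc: "\<And>p q. p \<in> Q \<Longrightarrow> q \<in> Q \<Longrightarrow> p \<noteq> q \<Longrightarrow> \<not> in_conflict n p q"
    using assms(5) unfolding without_conflict_def by blast
  have i1: "inj_on fst Q"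
    by (rule inj_onI) (metis inb mod_pos_pos_trivial nc in_conflict_def)
  have i2: "inj_on snd Q"
    by (rule inj_onI) (metis inb mod_pos_pos_trivial nc in_conflict_def)
  have i3: "inj_on (\<lambda>p. (fst p + snd p) mod int n) Q"
    by (rule inj_onI) (metis nc in_conflict_def)
  have i4: "inj_on (\<lambda>p. (fst p - snd p) mod int n) Q"
    by (rule inj_onI) (metis nc in_conflict_def)
  have np: "int n > 0" using assms(2) by simp
  obtain b where b: "0 \<le> b" "b < int n" "b \<notin> fst ` Q" "(\<Sum>q\<in>Q. fst q) = (\<Sum>{0..<int n}) - b"
    using missing[OF fin i1 _ assms(4,2)] inb by fastforce
  obtain a where a: "0 \<le> a" "a < int n" "a \<notin> snd ` Q" "(\<Sum>q\<in>Q. snd q) = (\<Sum>{0..<int n}) - a"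
    using missing[OF fin i2 _ assms(4,2)] inb by fastforce
  obtain c where c: "0 \<le> c" "c < int n" "c \<notin> (\<lambda>p. (fst p + snd p) mod int n) ` Q"
     "(\<Sum>q\<in>Q. (fst q + snd q) mod int n) = (\<Sum>{0..<int n}) - c"
    using missing[OF fin i3 _ assms(4,2)] np by fastforce
  obtain d where d: "0 \<le> d" "d < int n" "d \<notin> (\<lambda>p. (fst p - snd p) mod int n) ` Q"
     "(\<Sum>q\<in>Q. (fst q - snd q) mod int n) = (\<Sum>{0..<int n}) - d"
    using missing[OF fin i4 _ assms(4,2)] np by fastforce
  define T where "T = (\<Sum>{0..<int n})"
  have T: "T mod int n = 0" using sum_mod0[OF assms(1)] T_def by simp
  have "(\<Sum>q\<in>Q. (fst q + snd q) mod int n) mod int n = (\<Sum>q\<in>Q. fst q + snd q) mod int n"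
    by (simp add: mod_sum_eq)
  then have "(T - c) mod int n = (T - b + (T - a)) mod int n"
    using a b c T_def by (simp add: sum.distrib)
  then have "int n dvd (T - c) - (T - b + (T - a))" by (simp add: mod_eq_dvd_iff)
  moreover have "int n dvd T" using T by auto
  ultimately have "int n dvd (T - c) - (T - b + (T - a)) + T" by (rule dvd_add)
  then have "int n dvd (b + a) - c" by (simp add: algebra_simps)
  then have cc: "c = (b + a) mod int n" using c(1,2)
    by (metis mod_eq_dvd_iff mod_pos_pos_trivial)
  have "(\<Sum>q\<in>Q. (fst q - snd q) mod int n) mod int n = (\<Sum>q\<in>Q. fst q - snd q) mod int n"
    by (simp add: mod_sum_eq)
  then have "(T - d) mod int n = (T - b - (T - a)) mod int n"
    using a b d T_def by (simp add: sum_subtractf)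
  then have "int n dvd (T - d) - (T - b - (T - a))" by (simp add: mod_eq_dvd_iff)
  moreover have "int n dvd T" using T by auto
  ultimately have "int n dvd (T - d) - (T - b - (T - a)) - T" by (rule dvd_diff)
  then have "int n dvd (b - a) - d" by (simp add: algebra_simps)
  then have dd: "d = (b - a) mod int n" using d(1,2)
    by (metis mod_eq_dvd_iff mod_pos_pos_trivial)
  show ?thesis
  proof (intro bexI conjI)
    show "(b, a) \<in> board n" using a b unfolding board_def by auto
    show "(b, a) \<notin> Q" using b(3) by force
    show "without_conflict n (insert (b, a) Q)"
      unfolding without_conflict_def
    proof (intro ballI impI)
      fix p q assume "p \<in> insert (b, a) Q" "q \<in> insert (b, a) Q" "p \<noteq> q"
      have key: "\<not> in_conflict n (b, a) r \<and> \<not> in_conflict n r (b, a)" if r: "r \<in> Q" for r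
      proof -
        have "fst r \<noteq> b" "snd r \<noteq> a" using r a b by force+
        moreover have "(fst r + snd r) mod int n \<noteq> c" "(fst r - snd r) mod int n \<noteq> d" using r c d by force+
        ultimately show ?thesis using inb[OF r] a b cc dd unfolding in_conflict_def
          by (auto simp: mod_pos_pos_trivial)
      qed
      show "\<not> in_conflict n p q"
        using key[of p] key[of q] nc[of p q] \<open>p \<in> _\<close> \<open>q \<in> _\<close> \<open>p \<noteq> q\<close>
        by (cases "p = (b, a)"; cases "q = (b, a)") auto
    qed
  qed
qed
end
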